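(* Let $n\ge 1$, let $Q_n$ be the universal algebra of pseudo-roots, and let $\Gamma_n$ be the graph of subsets of $\{1,\dots,n\}$ (both defined in the context). Let $Z=\{x_{A_1,i_1},x_{A_2,i_2},\dots,x_{A_n,i_n}\}\subseteq Q_n$ be a set of pseudo-roots such that $i_1,i_2,\dots,i_n$ are pairwise distinct. If the set of edges $\{(A_1,i_1),(A_2,i_2),\dots,(A_n,i_n)\}$ of $\Gamma_n$ is connected, then $Z$ is a sufficient set, i.e. the $du$-envelope of $Z$ contains a defining set of pseudo-roots of $\mathcal P(t)$.
   Context: Fix a field $k$. The algebra $Q_n$ is the associative unital $k$-algebra with generators $x_{A,i}$, where $A\subseteq\{1,\dots,n\}$ and $i\in\{1,\dots,n\}\setminus A$ (these generators are called pseudo-roots), subject to the relations $x_{A\cup\{i\},j}+x_{A,i}=x_{A\cup\{j\},i}+x_{A,j}$ and $x_{A\cup\{i\},j}\,x_{A,i}=x_{A\cup\{j\},i}\,x_{A,j}$ for all $A\subseteq\{1,\dots,n\}$ and all $i\ne j$ with $i,j\notin A$. Let $t$ be a central indeterminate. For an ordering $(i_1,\dots,i_n)$ of $\{1,\dots,n\}$ put $A_1=\emptyset$, $A_k=\{i_1,\dots,i_{k-1}\}$, and $\mathcal P(t)=(t-x_{A_n,i_n})(t-x_{A_{n-1},i_{n-1}})\cdots(t-x_{A_1,i_1})\in Q_n[t]$; this polynomial is independent of the ordering. A set $Y$ of pseudo-roots is a defining set if $\mathcal P(t)=(t-y_n)(t-y_{n-1})\cdots(t-y_1)$ for some $y_1,\dots,y_n\in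 Y$. The graph $\Gamma_n$ has as vertices all subsets of $\{1,\dots,n\}$ and as edges the pairs $(A,i)$ with $i\notin A$; the edge $(A,i)$ has tail $A\cup\{i\}$ and head $A$ (it corresponds to the pseudo-root $x_{A,i}$). Operations on pseudo-roots: for two distinct pseudo-roots $x_{A,i},x_{B,j}$ whose edges have a common head ($A=B$), a pseudo-root $\xi$ is obtained from the ordered pair $(x_{A,i},x_{B,j})$ by the $u$-operation if $(x_{A,i}-x_{B,j})x_{A,i}=\xi(x_{A,i}-x_{B,j})$; for two distinct pseudo-roots whose edges have a common tail ($A\cup\{i\}=B\cup\{j\}$), a pseudo-root $\eta$ is obtained from the ordered pair $(x_{A,i},x_{B,j})$ by the $d$-operation if $(x_{A,i}-x_{B,j})\eta=x_{A,i}(x_{A,i}-x_{B,j})$. The $du$-envelope of a set $Z$ of pseudo-roots is the set of pseudo-roots obtainable from elements of $Z$ by successive applications of $d$- and $u$-operations (including $Z$ itself). $Z$ is sufficient if its $du$-envelope contains a defining set. A set $G$ of edges is connected if the undirected graph whose vertices are the heads and tails of edges of $G$ and whose edges are the edges of $G$ (directions forgotten) is connected. *)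

theory Defs
  imports Main
begin

text \<open>Pseudo-roots are labelled by pairs (A, i). Elements of Q_n[t] are represented by
 terms of the free term algebra over the generators, the scalars of k and a central
 indeterminate T, modulo the congruence generated by the axioms of associative unital
 k-algebras, centrality of scalars and of T, and the defining relations of Q_n.\<close>

type_synonym pr = "nat set \<times> nat"

definition is_pr :: "nat \<Rightarrow> pr \<Rightarrow> bool" where
  "is_pr n p \<longleftrightarrow> fst p \<subseteq> {1..n} \<and> snd p \<in> {1..n} \<and> snd p \<notin> fst p"

datatype 'k qterm = Gen pr | Sc 'k | T | Add "'k qterm" "'k qterm"
  | Mul "'k qterm" "'k qterm" | Neg "'k qterm"

definition Sub :: "'k qterm \<Rightarrow> 'k qterm \<Rightarrow> 'k qterm" where
  "Sub x y = Add x (Neg y)"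

text \<open>Equality in Q_n[t] (and, on T-free terms, in Q_n).\<close>
inductive qeq :: "nat \<Rightarrow> ('k::field) qterm \<Rightarrow> 'k qterm \<Rightarrow> bool" for n where
  refl: "qeq n x x"
| sym: "qeq n x y \<Longrightarrow> qeq n y x"
| trans: "qeq n x y \<Longrightarrow> qeq n y z \<Longrightarrow> qeq n x z"
| cong_add: "qeq n x x' \<Longrightarrow> qeq n y y' \<Longrightarrow> qeq n (Add x y) (Add x' y')"
| cong_mul: "qeq n x x' \<Longrightarrow> qeq n y y' \<Longrightarrow> qeq n (Mul x y) (Mul x' y')"
| cong_neg: "qeq n x x' \<Longrightarrow> qeq n (Neg x) (Neg x')"
| add_assoc: "qeq n (Add (Add x y) z) (Add x (Add y z))"
| add_comm: "qeq n (Add x y) (Add y x)"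
| add_zero: "qeq n (Add x (Sc 0)) x"
| add_neg: "qeq n (Add x (Neg x)) (Sc 0)"
| mul_assoc: "qeq n (Mul (Mul x y) z) (Mul x (Mul y z))"
| mul_one_left: "qeq n (Mul (Sc 1) x) x"
| mul_one_right: "qeq n (Mul x (Sc 1)) x"
| distrib_left: "qeq n (Mul x (Add y z)) (Add (Mul x y) (Mul x z))"
| distrib_right: "qeq n (Mul (Add x y) z) (Add (Mul x z) (Mul y z))"
| sc_add: "qeq n (Add (Sc a) (Sc b)) (Sc (a + b))"
| sc_mul: "qeq n (Mul (Sc a) (Sc b)) (Sc (a * b))"
| sc_central: "qeq n (Mul (Sc a) x) (Mul x (Sc a))"
| T_central: "qeq n (Mul T x) (Mul x T)"
| rel_add: "A \<subseteq> {1..n} \<Longrightarrow> i \<in> {1..n} \<Longrightarrow> j \<in> {1..n} \<Longrightarrow> i \<noteq> j \<Longrightarrow> i \<notin> A \<Longrightarrow> j \<notin> A \<Longrightarrow>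
    qeq n (Add (Gen (A \<union> {i}, j)) (Gen (A, i))) (Add (Gen (A \<union> {j}, i)) (Gen (A, j)))"
| rel_mul: "A \<subseteq> {1..n} \<Longrightarrow> i \<in> {1..n} \<Longrightarrow> j \<in> {1..n} \<Longrightarrow> i \<noteq> j \<Longrightarrow> i \<notin> A \<Longrightarrow> j \<notin> A \<Longrightarrow>
    qeq n (Mul (Gen (A \<union> {i}, j)) (Gen (A, i))) (Mul (Gen (A \<union> {j}, i)) (Gen (A, j)))"

definition qprod :: "'k::field qterm list \<Rightarrow> 'k qterm" where
  "qprod xs = foldr Mul xs (Sc 1)"

text \<open>P(t) = (t - x_{A_n,i_n}) ... (t - x_{A_1,i_1}) for the ordering (1,...,n).\<close>
definition Ppoly :: "nat \<Rightarrow> 'k::field qterm" where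
  "Ppoly n = qprod (map (\<lambda>k. Sub T (Gen (set (take k [1..<Suc n]), [1..<Suc n] ! k)))
                      (rev [0..<n]))"

definition defining_set :: "nat \<Rightarrow> 'k::field itself \<Rightarrow> pr set \<Rightarrow> bool" where
  "defining_set n _ Y \<longleftrightarrow> (\<exists>ys. length ys = n \<and> set ys \<subseteq> Y \<and>
      qeq n (Ppoly n :: 'k qterm) (qprod (map (\<lambda>y. Sub T (Gen y)) (rev ys))))"

inductive_set envelope :: "nat \<Rightarrow> 'k::field itself \<Rightarrow> pr set \<Rightarrow> pr set" for n K Z where
  base: "z \<in> Z \<Longrightarrow> z \<in> envelope n K Z"
| u_op: "(A, i) \<in> envelope n K Z \<Longrightarrow> (A, j) \<in> envelope n K Z \<Longrightarrow> i \<noteq> j \<Longrightarrow> is_pr n xi \<Longrightarrow>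
    qeq n (Mul (Sub (Gen (A, i)) (Gen (A, j))) (Gen (A, i)) :: 'k qterm)
          (Mul (Gen xi) (Sub (Gen (A, i)) (Gen (A, j)))) \<Longrightarrow> xi \<in> envelope n K Z"
| d_op: "(A, i) \<in> envelope n K Z \<Longrightarrow> (B, j) \<in> envelope n K Z \<Longrightarrow> (A, i) \<noteq> (B, j) \<Longrightarrow>
    A \<union> {i} = B \<union> {j} \<Longrightarrow> is_pr n eta \<Longrightarrow>
    qeq n (Mul (Sub (Gen (A, i)) (Gen (B, j))) (Gen eta) :: 'k qterm)
          (Mul (Gen (A, i)) (Sub (Gen (A, i)) (Gen (B, j)))) \<Longrightarrow> eta \<in> envelope n K Z"

definition sufficient :: "nat \<Rightarrow> 'k::field itself \<Rightarrow> pr set \<Rightarrow> bool" where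
  "sufficient n K Z \<longleftrightarrow> (\<exists>Y \<subseteq> envelope n K Z. defining_set n K Y)"

text \<open>Connectedness of a set of edges of Gamma_n (edge (A,i): tail A \<union> {i}, head A).\<close>
definition edge_vertices :: "pr set \<Rightarrow> nat set set" where
  "edge_vertices G = (\<Union>(A, i)\<in>G. {A, A \<union> {i}})"

definition edge_adj :: "pr set \<Rightarrow> nat set \<Rightarrow> nat set \<Rightarrow> bool" where
  "edge_adj G u v \<longleftrightarrow> (\<exists>(A, i)\<in>G. (u = A \<and> v = A \<union> {i}) \<or> (v = A \<and> u = A \<union> {i}))"

definition edges_connected :: "pr set \<Rightarrow> bool" where
  "edges_connected G \<longleftrightarrow>
     (\<forall>u\<in>edge_vertices G. \<forall>v\<in>edge_vertices G. (edge_adj G)\<^sup>*\<^sup>* u v)"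

end

theory Submission
  imports Defs
begin


lemmas qtrans[trans] = qeq.trans

lemma add_zero_l: "qeq n (Add (Sc 0) x) x"
  by (meson qeq.add_comm qeq.add_zero qeq.trans)

lemma neg_unique:
  assumes "qeq n (Add u v) (Sc 0)" shows "qeq n v (Neg u)"
proof -
  have "qeq n v (Add v (Sc 0))" by (rule qeq.sym, rule qeq.add_zero)
  also have "qeq n \<dots> (Add v (Add u (Neg u)))"
    by (rule qeq.cong_add, rule qeq.refl, rule qeq.sym, rule qeq.add_neg)
  also have "qeq n \<dots> (Add (Add v u) (Neg u))" by (rule qeq.sym, rule qeq.add_assoc)
  also have "qeq n \<dots> (Add (Add u v) (Neg u))" by (rule qeq.cong_add, rule qeq.add_comm, rule qeq.refl)
  also have "qeq n \<dots> (Add (Sc 0) (Neg u))" by (rule qeq.cong_add, rule assms, rule qeq.refl)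
  also have "qeq n \<dots> (Neg u)" by (rule add_zero_l)
  finally show ?thesis .
qed

lemma idem_zero:
  assumes "qeq n (Add z z) z" shows "qeq n z (Sc 0)"
proof -
  have "qeq n z (Add z (Sc 0))" by (rule qeq.sym, rule qeq.add_zero)
  also have "qeq n \<dots> (Add z (Add z (Neg z)))"
    by (rule qeq.cong_add, rule qeq.refl, rule qeq.sym, rule qeq.add_neg)
  also have "qeq n \<dots> (Add (Add z z) (Neg z))" by (rule qeq.sym, rule qeq.add_assoc)
  also have "qeq n \<dots> (Add z (Neg z))" by (rule qeq.cong_add, rule assms, rule qeq.refl)
  also have "qeq n \<dots> (Sc 0)" by (rule qeq.add_neg)
  finally show ?thesis .
qed

lemma sc00: "qeq n (Add (Sc 0) (Sc 0)) (Sc (0::'k::field))"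
  using qeq.sc_add[of n "0::'k" 0] by simp

lemma mul_zero_r: "qeq n (Mul x (Sc 0)) (Sc 0)"
proof (rule idem_zero)
  have "qeq n (Add (Mul x (Sc 0)) (Mul x (Sc 0))) (Mul x (Add (Sc 0) (Sc 0)))"
    by (rule qeq.sym, rule qeq.distrib_left)
  also have "qeq n \<dots> (Mul x (Sc 0))" by (rule qeq.cong_mul, rule qeq.refl, rule sc00)
  finally show "qeq n (Add (Mul x (Sc 0)) (Mul x (Sc 0))) (Mul x (Sc 0))" .
qed

lemma mul_zero_l: "qeq n (Mul (Sc 0) x) (Sc 0)"
proof (rule idem_zero)
  have "qeq n (Add (Mul (Sc 0) x) (Mul (Sc 0) x)) (Mul (Add (Sc 0) (Sc 0)) x)"
    by (rule qeq.sym, rule qeq.distrib_right)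
  also have "qeq n \<dots> (Mul (Sc 0) x)" by (rule qeq.cong_mul, rule sc00, rule qeq.refl)
  finally show "qeq n (Add (Mul (Sc 0) x) (Mul (Sc 0) x)) (Mul (Sc 0) x)" .
qed

lemma mul_neg_r: "qeq n (Mul x (Neg y)) (Neg (Mul x y))"
proof (rule neg_unique)
  have "qeq n (Add (Mul x y) (Mul x (Neg y))) (Mul x (Add y (Neg y)))"
    by (rule qeq.sym, rule qeq.distrib_left)
  also have "qeq n \<dots> (Mul x (Sc 0))" by (rule qeq.cong_mul, rule qeq.refl, rule qeq.add_neg)
  also have "qeq n \<dots> (Sc 0)" by (rule mul_zero_r)
  finally show "qeq n (Add (Mul x y) (Mul x (Neg y))) (Sc 0)" .
qed

lemma mul_neg_l: "qeq n (Mul (Neg x) y) (Neg (Mul x y))"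
proof (rule neg_unique)
  have "qeq n (Add (Mul x y) (Mul (Neg x) y)) (Mul (Add x (Neg x)) y)"
    by (rule qeq.sym, rule qeq.distrib_right)
  also have "qeq n \<dots> (Mul (Sc 0) y)" by (rule qeq.cong_mul, rule qeq.add_neg, rule qeq.refl)
  also have "qeq n \<dots> (Sc 0)" by (rule mul_zero_l)
  finally show "qeq n (Add (Mul x y) (Mul (Neg x) y)) (Sc 0)" .
qed

lemma neg_neg: "qeq n (Neg (Neg x)) x"
proof (rule qeq.sym, rule neg_unique)
  show "qeq n (Add (Neg x) x) (Sc 0)"
    by (meson qeq.add_comm qeq.add_neg qeq.trans)
qed

lemma swap_mid: "qeq n (Add (Add p q) (Add r s)) (Add (Add p r) (Add q s))"
proof -
  have "qeq n (Add (Add p q) (Add r s)) (Add p (Add q (Add r s)))" by (rule qeq.add_assoc)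
  also have "qeq n \<dots> (Add p (Add (Add q r) s))"
    by (rule qeq.cong_add, rule qeq.refl, rule qeq.sym, rule qeq.add_assoc)
  also have "qeq n \<dots> (Add p (Add (Add r q) s))"
    by (rule qeq.cong_add, rule qeq.refl, rule qeq.cong_add, rule qeq.add_comm, rule qeq.refl)
  also have "qeq n \<dots> (Add p (Add r (Add q s)))"
    by (rule qeq.cong_add, rule qeq.refl, rule qeq.add_assoc)
  also have "qeq n \<dots> (Add (Add p r) (Add q s))" by (rule qeq.sym, rule qeq.add_assoc)
  finally show ?thesis .
qed

lemma add_zero_r2: "qeq n (Add x y) (Sc 0) \<Longrightarrow> qeq n (Add x (Add y z)) z"
proof -
  assume h: "qeq n (Add x y) (Sc 0)"
  have "qeq n (Add x (Add y z)) (Add (Add x y) z)" by (rule qeq.sym, rule qeq.add_assoc)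
  also have "qeq n \<dots> (Add (Sc 0) z)" by (rule qeq.cong_add, rule h, rule qeq.refl)
  also have "qeq n \<dots> z" by (rule add_zero_l)
  finally show ?thesis .
qed

lemma neg_add: "qeq n (Neg (Add x y)) (Add (Neg x) (Neg y))"
proof (rule qeq.sym, rule neg_unique)
  have "qeq n (Add (Add x y) (Add (Neg x) (Neg y))) (Add (Add x (Neg x)) (Add y (Neg y)))"
    by (rule swap_mid)
  also have "qeq n \<dots> (Add (Sc 0) (Sc 0))" by (rule qeq.cong_add, rule qeq.add_neg, rule qeq.add_neg)
  also have "qeq n \<dots> (Sc 0)" by (rule add_zero_l)
  finally show "qeq n (Add (Add x y) (Add (Neg x) (Neg y))) (Sc 0)" .
qed

lemma diff_eq:
  assumes "qeq n (Add c a) (Add d b)"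
  shows "qeq n (Sub d c) (Sub a b)"
proof -
  have "qeq n (Sub d c) (Add (Sub d c) (Sc 0))" by (rule qeq.sym, rule qeq.add_zero)
  also have "qeq n \<dots> (Add (Add d (Neg c)) (Add b (Neg b)))"
    unfolding Sub_def by (rule qeq.cong_add, rule qeq.refl, rule qeq.sym, rule qeq.add_neg)
  also have "qeq n \<dots> (Add (Add d b) (Add (Neg c) (Neg b)))" by (rule swap_mid)
  also have "qeq n \<dots> (Add (Add c a) (Add (Neg c) (Neg b)))"
    by (rule qeq.cong_add, rule qeq.sym, rule assms, rule qeq.refl)
  also have "qeq n \<dots> (Add (Add c (Neg c)) (Add a (Neg b)))" by (rule swap_mid)
  also have "qeq n \<dots> (Add (Sc 0) (Add a (Neg b)))" by (rule qeq.cong_add, rule qeq.add_neg, rule qeq.refl)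
  also have "qeq n \<dots> (Sub a b)" unfolding Sub_def by (rule add_zero_l)
  finally show ?thesis .
qed

lemma mul_sub_r: "qeq n (Mul x (Sub y z)) (Sub (Mul x y) (Mul x z))"
  unfolding Sub_def
  by (rule qeq.trans, rule qeq.distrib_left, rule qeq.cong_add, rule qeq.refl, rule mul_neg_r)

lemma mul_sub_l: "qeq n (Mul (Sub x y) z) (Sub (Mul x z) (Mul y z))"
  unfolding Sub_def
  by (rule qeq.trans, rule qeq.distrib_right, rule qeq.cong_add, rule qeq.refl, rule mul_neg_l)

lemma sub_cong: "qeq n x x' \<Longrightarrow> qeq n y y' \<Longrightarrow> qeq n (Sub x y) (Sub x' y')"
  unfolding Sub_def by (intro qeq.cong_add qeq.cong_neg)

lemma u_ident:
  assumes r1: "qeq n (Add c a) (Add d b)" and r2: "qeq n (Mul c a) (Mul d b)"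
  shows "qeq n (Mul (Sub a b) a) (Mul d (Sub a b))"
proof (rule qeq.sym)
  have "qeq n (Mul d (Sub a b)) (Sub (Mul d a) (Mul d b))" by (rule mul_sub_r)
  also have "qeq n \<dots> (Sub (Mul d a) (Mul c a))" by (rule sub_cong, rule qeq.refl, rule qeq.sym, rule r2)
  also have "qeq n \<dots> (Mul (Sub d c) a)" by (rule qeq.sym, rule mul_sub_l)
  also have "qeq n \<dots> (Mul (Sub a b) a)" by (rule qeq.cong_mul, rule diff_eq, rule r1, rule qeq.refl)
  finally show "qeq n (Mul d (Sub a b)) (Mul (Sub a b) a)" .
qed

lemma d_ident:
  assumes r1: "qeq n (Add c a) (Add d b)" and r2: "qeq n (Mul c a) (Mul d b)"
  shows "qeq n (Mul (Sub d c) a) (Mul d (Sub d c))"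
proof (rule qeq.sym)
  have "qeq n (Mul d (Sub d c)) (Mul d (Sub a b))" by (rule qeq.cong_mul, rule qeq.refl, rule diff_eq, rule r1)
  also have "qeq n \<dots> (Sub (Mul d a) (Mul d b))" by (rule mul_sub_r)
  also have "qeq n \<dots> (Sub (Mul d a) (Mul c a))" by (rule sub_cong, rule qeq.refl, rule qeq.sym, rule r2)
  also have "qeq n \<dots> (Mul (Sub d c) a)" by (rule qeq.sym, rule mul_sub_l)
  finally show "qeq n (Mul d (Sub d c)) (Mul (Sub d c) a)" .
qed

lemma expand:
  "qeq n (Mul (Sub T c) (Sub T a)) (Add (Mul T T) (Add (Neg (Mul T (Add c a))) (Mul c a)))"
proof -
  have e1: "qeq n (Mul T (Sub T a)) (Add (Mul T T) (Neg (Mul T a)))"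
    using mul_sub_r[of n T T a] unfolding Sub_def .
  have "qeq n (Mul (Neg c) (Sub T a)) (Add (Mul (Neg c) T) (Mul (Neg c) (Neg a)))"
    unfolding Sub_def by (rule qeq.distrib_left)
  also have "qeq n \<dots> (Add (Neg (Mul T c)) (Mul c a))"
  proof (rule qeq.cong_add)
    have "qeq n (Mul (Neg c) T) (Neg (Mul c T))" by (rule mul_neg_l)
    also have "qeq n \<dots> (Neg (Mul T c))" by (rule qeq.cong_neg, rule qeq.sym, rule qeq.T_central)
    finally show "qeq n (Mul (Neg c) T) (Neg (Mul T c))" .
    have "qeq n (Mul (Neg c) (Neg a)) (Neg (Mul c (Neg a)))" by (rule mul_neg_l)
    also have "qeq n \<dots> (Neg (Neg (Mul c a)))" by (rule qeq.cong_neg, rule mul_neg_r)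
    also have "qeq n \<dots> (Mul c a)" by (rule neg_neg)
    finally show "qeq n (Mul (Neg c) (Neg a)) (Mul c a)" .
  qed
  finally have e2: "qeq n (Mul (Neg c) (Sub T a)) (Add (Neg (Mul T c)) (Mul c a))" .
  have inner: "qeq n (Add (Neg (Mul T a)) (Neg (Mul T c))) (Neg (Mul T (Add c a)))"
  proof -
    have "qeq n (Add (Neg (Mul T a)) (Neg (Mul T c))) (Add (Neg (Mul T c)) (Neg (Mul T a)))"
      by (rule qeq.add_comm)
    also have "qeq n \<dots> (Neg (Add (Mul T c) (Mul T a)))" by (rule qeq.sym, rule neg_add)
    also have "qeq n \<dots> (Neg (Mul T (Add c a)))" by (rule qeq.cong_neg, rule qeq.sym, rule qeq.distrib_left)
    finally show ?thesis .
  qed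
  have "qeq n (Mul (Sub T c) (Sub T a)) (Add (Mul T (Sub T a)) (Mul (Neg c) (Sub T a)))"
    unfolding Sub_def by (rule qeq.distrib_right)
  also have "qeq n \<dots> (Add (Add (Mul T T) (Neg (Mul T a))) (Add (Neg (Mul T c)) (Mul c a)))"
    by (rule qeq.cong_add, rule e1, rule e2)
  also have "qeq n \<dots> (Add (Mul T T) (Add (Neg (Mul T a)) (Add (Neg (Mul T c)) (Mul c a))))"
    by (rule qeq.add_assoc)
  also have "qeq n \<dots> (Add (Mul T T) (Add (Add (Neg (Mul T a)) (Neg (Mul T c))) (Mul c a)))"
    by (rule qeq.cong_add, rule qeq.refl, rule qeq.sym, rule qeq.add_assoc)
  also have "qeq n \<dots> (Add (Mul T T) (Add (Neg (Mul T (Add c a))) (Mul c a)))"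
    by (rule qeq.cong_add, rule qeq.refl, rule qeq.cong_add, rule inner, rule qeq.refl)
  finally show ?thesis .
qed

lemma quad_swap:
  assumes r1: "qeq n (Add c a) (Add d b)" and r2: "qeq n (Mul c a) (Mul d b)"
  shows "qeq n (Mul (Sub T c) (Sub T a)) (Mul (Sub T d) (Sub T b))"
proof -
  have "qeq n (Mul (Sub T c) (Sub T a)) (Add (Mul T T) (Add (Neg (Mul T (Add c a))) (Mul c a)))"
    by (rule expand)
  also have "qeq n \<dots> (Add (Mul T T) (Add (Neg (Mul T (Add d b))) (Mul d b)))"
    by (intro qeq.cong_add qeq.cong_neg qeq.cong_mul qeq.refl r1 r2)
  also have "qeq n \<dots> (Mul (Sub T d) (Sub T b))" by (rule qeq.sym, rule expand)
  finally show ?thesis .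
qed



lemma qprod_Nil[simp]: "qprod [] = Sc 1" and qprod_Cons[simp]: "qprod (a # l) = Mul a (qprod l)"
  by (simp_all add: qprod_def)

lemma qprod_append: "qeq n (qprod (l1 @ l2)) (Mul (qprod l1) (qprod l2))"
proof (induction l1)
  case Nil
  then show ?case by (simp, rule qeq.sym, rule qeq.mul_one_left)
next
  case (Cons a l1)
  have "qeq n (qprod ((a # l1) @ l2)) (Mul a (Mul (qprod l1) (qprod l2)))"
    by (simp, rule qeq.cong_mul, rule qeq.refl, rule Cons.IH)
  also have "qeq n \<dots> (Mul (qprod (a # l1)) (qprod l2))" by (simp, rule qeq.sym, rule qeq.mul_assoc)
  finally show ?case .
qed

lemma qprod_cong_left:
  assumes "qeq n (qprod l1) (qprod l1')"
  shows "qeq n (qprod (l1 @ l2)) (qprod (l1' @ l2))"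
proof -
  have "qeq n (qprod (l1 @ l2)) (Mul (qprod l1) (qprod l2))" by (rule qprod_append)
  also have "qeq n \<dots> (Mul (qprod l1') (qprod l2))" by (rule qeq.cong_mul, rule assms, rule qeq.refl)
  also have "qeq n \<dots> (qprod (l1' @ l2))" by (rule qeq.sym, rule qprod_append)
  finally show ?thesis .
qed

lemma qprod_two: "qeq n (qprod [p, q]) (Mul p q)"
  by (simp, rule qeq.cong_mul, rule qeq.refl, rule qeq.mul_one_right)

lemma qprod_cong_right2:
  assumes "qeq n (Mul p q) (Mul p' q')"
  shows "qeq n (qprod (l @ [p, q])) (qprod (l @ [p', q']))"
proof -
  have "qeq n (qprod (l @ [p, q])) (Mul (qprod l) (qprod [p, q]))" by (rule qprod_append)
  also have "qeq n \<dots> (Mul (qprod l) (qprod [p', q']))"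
  proof (rule qeq.cong_mul, rule qeq.refl)
    have "qeq n (qprod [p, q]) (Mul p q)" by (rule qprod_two)
    also have "qeq n \<dots> (Mul p' q')" by (rule assms)
    also have "qeq n \<dots> (qprod [p', q'])" by (rule qeq.sym, rule qprod_two)
    finally show "qeq n (qprod [p, q]) (qprod [p', q'])" .
  qed
  also have "qeq n \<dots> (qprod (l @ [p', q']))" by (rule qeq.sym, rule qprod_append)
  finally show ?thesis .
qed

fun FF :: "nat set \<Rightarrow> nat list \<Rightarrow> 'k::field qterm list" where
  "FF B [] = []"
| "FF B (x # xs) = FF (insert x B) xs @ [Sub T (Gen (B, x))]"

lemma FF_map: "FF B xs = map (\<lambda>k. Sub T (Gen (B \<union> set (take k xs), xs ! k))) (rev [0..<length xs])"
proof (induction xs arbitrary: B)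
  case Nil then show ?case by simp
next
  case (Cons x xs)
  have "[0..<Suc (length xs)] = 0 # map Suc [0..<length xs]"
    by (simp only: map_Suc_upt upt_conv_Cons[OF zero_less_Suc])
  then show ?case using Cons by (simp add: rev_map comp_def)
qed

lemma swap2:
  assumes "B \<subseteq> {1..n}" "a \<in> {1..n}" "y \<in> {1..n}" "a \<noteq> y" "a \<notin> B" "y \<notin> B"
  shows "qeq n (Mul (Sub T (Gen (insert a B, y))) (Sub T (Gen (B, a)) :: 'k::field qterm))
                (Mul (Sub T (Gen (insert y B, a))) (Sub T (Gen (B, y))))"
  apply (rule quad_swap)
  using qeq.rel_add[OF assms] qeq.rel_mul[OF assms] by simp_all

lemma move_front:
  assumes "B \<subseteq> {1..n}" "set (pre @ y # post) \<subseteq> {1..n}" "B \<inter> set (pre @ y # post) = {}"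
    "distinct (pre @ y # post)"
  shows "qeq n (qprod (FF B (pre @ y # post) :: 'k::field qterm list)) (qprod (FF B (y # pre @ post)))"
  using assms
proof (induction pre arbitrary: B)
  case Nil then show ?case by (simp add: qeq.refl)
next
  case (Cons a pre)
  have IH: "qeq n (qprod (FF (insert a B) (pre @ y # post) :: 'k qterm list))
                  (qprod (FF (insert a B) (y # pre @ post)))"
    using Cons.prems by (intro Cons.IH) auto
  have "qeq n (qprod (FF B ((a # pre) @ y # post) :: 'k qterm list))
              (qprod (FF (insert a B) (y # pre @ post) @ [Sub T (Gen (B, a))]))"
    using qprod_cong_left[OF IH, of "[Sub T (Gen (B, a))]"] by simp
  also have "FF (insert a B) (y # pre @ post) @ [Sub T (Gen (B, a))] =
     FF (insert y (insert a B)) (pre @ post) @ [Sub T (Gen (insert a B, y)), Sub T (Gen (B, a)) :: 'k qterm]"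
    by simp
  also have "qeq n (qprod \<dots>) (qprod (FF (insert y (insert a B)) (pre @ post) @
         [Sub T (Gen (insert y B, a)), Sub T (Gen (B, y)) :: 'k qterm]))"
    by (rule qprod_cong_right2, rule swap2, insert Cons.prems, auto)
  also have "FF (insert y (insert a B)) (pre @ post) @
         [Sub T (Gen (insert y B, a)), Sub T (Gen (B, y)) :: 'k qterm] = FF B (y # (a # pre) @ post)"
    by (simp add: insert_commute)
  finally show ?case .
qed

lemma perm_FF:
  assumes "B \<subseteq> {1..n}" "set xs \<subseteq> {1..n}" "B \<inter> set xs = {}" "distinct xs"
    "distinct xs'" "set xs' = set xs"
  shows "qeq n (qprod (FF B xs :: 'k::field qterm list)) (qprod (FF B xs'))"
  using assms
proof (induction xs' arbitrary: B xs)
  case Nil then show ?case by (simp add: qeq.refl)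
next
  case (Cons y ys)
  then have "y \<in> set xs" by auto
  then obtain pre post where xs: "xs = pre @ y # post" by (meson split_list)
  have "qeq n (qprod (FF B xs :: 'k qterm list)) (qprod (FF B (y # pre @ post)))"
    unfolding xs by (rule move_front, insert Cons.prems xs, auto)
  also have "qeq n \<dots> (qprod (FF B (y # ys)))"
  proof -
    have "qeq n (qprod (FF (insert y B) (pre @ post) :: 'k qterm list)) (qprod (FF (insert y B) ys))"
      apply (rule Cons.IH) using Cons.prems xs by auto
    then show ?thesis by (simp, rule qprod_cong_left)
  qed
  finally show ?case .
qed

lemma Ppoly_FF: "Ppoly n = qprod (FF {} [1..<Suc n])"
  unfolding Ppoly_def FF_map by simp



lemma env_pr: assumes "\<forall>z\<in>Z. is_pr n z" and "x \<in> envelope n K Z" shows "is_pr n x"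
  using assms(2) by (induction rule: envelope.induct) (use assms(1) in auto)

lemma env_u:
  fixes K :: "'k::field itself"
  assumes Zp: "\<forall>z\<in>Z. is_pr n z"
    and h1: "(A, i) \<in> envelope n K Z" and h2: "(A, j) \<in> envelope n K Z" and ij: "i \<noteq> j"
  shows "(insert j A, i) \<in> envelope n K Z"
proof -
  have p1: "is_pr n (A, i)" and p2: "is_pr n (A, j)" using env_pr[OF Zp] h1 h2 by auto
  then have c: "A \<subseteq> {1..n}" "i \<in> {1..n}" "j \<in> {1..n}" "i \<notin> A" "j \<notin> A" by (auto simp: is_pr_def)
  have pr: "is_pr n (insert j A, i)" using c ij by (auto simp: is_pr_def)
  show ?thesis
  proof (rule envelope.u_op[OF h1 h2 ij pr])
    show "qeq n (Mul (Sub (Gen (A, i)) (Gen (A, j))) (Gen (A, i)) :: 'k qterm)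
          (Mul (Gen (insert j A, i)) (Sub (Gen (A, i)) (Gen (A, j))))"
      apply (rule u_ident[where c = "Gen (insert i A, j)"])
      using qeq.rel_add[OF c(1,2,3) ij c(4,5)] qeq.rel_mul[OF c(1,2,3) ij c(4,5)] by simp_all
  qed
qed

lemma env_d:
  fixes K :: "'k::field itself"
  assumes Zp: "\<forall>z\<in>Z. is_pr n z"
    and h1: "(insert j D, i) \<in> envelope n K Z" and h2: "(insert i D, j) \<in> envelope n K Z" and ij: "i \<noteq> j"
  shows "(D, i) \<in> envelope n K Z"
proof -
  have p1: "is_pr n (insert j D, i)" and p2: "is_pr n (insert i D, j)" using env_pr[OF Zp] h1 h2 by auto
  then have c: "D \<subseteq> {1..n}" "i \<in> {1..n}" "j \<in> {1..n}" "i \<notin> D" "j \<notin> D" by (auto simp: is_pr_def)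
  have pr: "is_pr n (D, i)" using c by (auto simp: is_pr_def)
  show ?thesis
  proof (rule envelope.d_op[OF h1 h2 _ _ pr])
    show "(insert j D, i) \<noteq> (insert i D, j)" using ij by simp
    show "insert j D \<union> {i} = insert i D \<union> {j}" by auto
    show "qeq n (Mul (Sub (Gen (insert j D, i)) (Gen (insert i D, j))) (Gen (D, i)) :: 'k qterm)
          (Mul (Gen (insert j D, i)) (Sub (Gen (insert j D, i)) (Gen (insert i D, j))))"
      apply (rule d_ident[where b = "Gen (D, j)"])
      using qeq.rel_add[OF c(1,2,3) ij c(4,5)] qeq.rel_mul[OF c(1,2,3) ij c(4,5)] by simp_all
  qed
qed

fun chain :: "pr set \<Rightarrow> nat set \<Rightarrow> nat list \<Rightarrow> bool" where
  "chain E B [] = True"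
| "chain E B (x # xs) = (x \<notin> B \<and> x \<notin> set xs \<and> (B, x) \<in> E \<and> chain E (insert x B) xs)"

fun verts :: "nat set \<Rightarrow> nat list \<Rightarrow> nat set list" where
  "verts B [] = [B]"
| "verts B (x # xs) = B # verts (insert x B) xs"

lemma verts_bounds: "v \<in> set (verts B xs) \<Longrightarrow> B \<subseteq> v \<and> v \<subseteq> B \<union> set xs"
  by (induction xs arbitrary: B) auto

lemma verts_top: "B \<union> set xs \<in> set (verts B xs)"
proof (induction xs arbitrary: B)
  case (Cons a xs)
  from Cons.IH[of "insert a B"] show ?case by simp
qed simp

lemma chain_disj: "chain E B xs \<Longrightarrow> B \<inter> set xs = {} \<and> distinct xs"
  by (induction xs arbitrary: B) auto

lemma chain_edges: "chain E B xs \<Longrightarrow> k < length xs \<Longrightarrow> (B \<union> set (take k xs), xs ! k) \<in> E"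
proof (induction xs arbitrary: B k)
  case Nil then show ?case by simp
next
  case (Cons x xs)
  show ?case
  proof (cases k)
    case 0 then show ?thesis using Cons by simp
  next
    case (Suc k')
    then have "(insert x B \<union> set (take k' xs), xs ! k') \<in> E" using Cons.prems Cons.IH[of "insert x B" k'] by auto
    then show ?thesis using Suc by simp
  qed
qed

context
  fixes n :: nat and K :: "'k::field itself" and Z :: "pr set"
  assumes Zp: "\<forall>z\<in>Z. is_pr n z"
begin

abbreviation "EE \<equiv> envelope n K Z"

lemma lift_all:
  "chain EE B xs \<Longrightarrow> l \<notin> B \<Longrightarrow> l \<notin> set xs \<Longrightarrow> (B, l) \<in> EE \<Longrightarrow>
     chain EE (insert l B) xs \<and> (B \<union> set xs, l) \<in> EE"
proof (induction xs arbitrary: B)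
  case Nil then show ?case by simp
next
  case (Cons x xs)
  have lx: "l \<noteq> x" using Cons.prems by auto
  have e1: "(insert l B, x) \<in> EE" using env_u[OF Zp, of B x K l] Cons.prems lx by auto
  have e2: "(insert x B, l) \<in> EE" using env_u[OF Zp, of B l K x] Cons.prems lx by auto
  have IH: "chain EE (insert l (insert x B)) xs \<and> (insert x B \<union> set xs, l) \<in> EE"
    using Cons.prems lx e2 by (intro Cons.IH) auto
  show ?case using IH e1 Cons.prems lx by (simp add: insert_commute)
qed

lemma lift:
  "chain EE B xs \<Longrightarrow> l \<notin> B \<Longrightarrow> l \<notin> set xs \<Longrightarrow> v \<in> set (verts B xs) \<Longrightarrow> (v, l) \<in> EE \<Longrightarrow>
     (B \<union> set xs, l) \<in> EE \<and> (\<exists>ys. chain EE B ys \<and> set ys = insert l (set xs) \<and>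
        v \<in> set (verts B ys) \<and> insert l v \<in> set (verts B ys))"
proof (induction xs arbitrary: B)
  case Nil
  then show ?case by (intro conjI exI[of _ "[l]"]) auto
next
  case (Cons x xs)
  show ?case
  proof (cases "v = B")
    case True
    have L: "chain EE (insert l B) (x # xs) \<and> (B \<union> set (x # xs), l) \<in> EE"
      using lift_all[of B "x # xs" l] Cons.prems True by simp
    have "chain EE (insert l B) (x # xs)" using lift_all[of B "x # xs" l] Cons.prems True by simp
    then show ?thesis using L Cons.prems True
      by (intro conjI exI[of _ "l # x # xs"]) auto
  next
    case False
    then have v: "v \<in> set (verts (insert x B) xs)" using Cons.prems by simp
    have IH: "(insert x B \<union> set xs, l) \<in> EE \<and> (\<exists>ys. chain EE (insert x B) ys \<and> set ys = insert l (set xs) \<and>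
        v \<in> set (verts (insert x B) ys) \<and> insert l v \<in> set (verts (insert x B) ys))"
      using Cons.prems v by (intro Cons.IH) auto
    then obtain ys where ys: "chain EE (insert x B) ys" "set ys = insert l (set xs)"
        "v \<in> set (verts (insert x B) ys)" "insert l v \<in> set (verts (insert x B) ys)" by blast
    show ?thesis
      apply (intro conjI exI[of _ "x # ys"])
      using IH ys Cons.prems by auto
  qed
qed

lemma append_top:
  "chain EE B xs \<Longrightarrow> l \<notin> B \<Longrightarrow> l \<notin> set xs \<Longrightarrow> (B \<union> set xs, l) \<in> EE \<Longrightarrow>
     chain EE B (xs @ [l]) \<and> set (verts B xs) \<subseteq> set (verts B (xs @ [l]))"
proof (induction xs arbitrary: B)
  case Nil then show ?case by simp
next
  case (Cons x xs)
  have "chain EE (insert x B) (xs @ [l]) \<and> set (verts (insert x B) xs) \<subseteq> set (verts (insert x B) (xs @ [l]))"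
    using Cons.prems by (intro Cons.IH) auto
  then show ?case using Cons.prems by auto
qed

lemma lower:
  "chain EE B xs \<Longrightarrow> l \<in> B \<Longrightarrow> l \<notin> set xs \<Longrightarrow> v \<in> set (verts B xs) \<Longrightarrow> (v - {l}, l) \<in> EE \<Longrightarrow>
     (B - {l}, l) \<in> EE \<and> (\<exists>ys. chain EE (B - {l}) ys \<and> set ys = insert l (set xs) \<and>
        v \<in> set (verts (B - {l}) ys) \<and> v - {l} \<in> set (verts (B - {l}) ys))"
proof (induction xs arbitrary: B)
  case Nil
  then have vB: "v = B" by simp
  have "insert l (B - {l}) = B" using Nil.prems by auto
  then show ?case using Nil.prems vB by (intro conjI exI[of _ "[l]"]) auto
next
  case (Cons x xs)
  have ins: "insert l (B - {l}) = B" using Cons.prems by auto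
  show ?case
  proof (cases "v = B")
    case True
    then show ?thesis using Cons.prems ins
      by (intro conjI exI[of _ "l # x # xs"]) auto
  next
    case False
    then have v: "v \<in> set (verts (insert x B) xs)" using Cons.prems by simp
    have lx: "l \<noteq> x" using Cons.prems by auto
    have IH: "(insert x B - {l}, l) \<in> EE \<and> (\<exists>ys. chain EE (insert x B - {l}) ys \<and> set ys = insert l (set xs) \<and>
        v \<in> set (verts (insert x B - {l}) ys) \<and> v - {l} \<in> set (verts (insert x B - {l}) ys))"
      using Cons.prems v by (intro Cons.IH) auto
    then obtain ys where ys: "chain EE (insert x B - {l}) ys" "set ys = insert l (set xs)"
        "v \<in> set (verts (insert x B - {l}) ys)" "v - {l} \<in> set (verts (insert x B - {l}) ys)" by blast
    have a1: "(insert l (B - {l}), x) \<in> EE" using ins Cons.prems by simp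
    have a2: "(insert x (B - {l}), l) \<in> EE" using IH lx by (simp add: insert_Diff_if)
    have d1: "(B - {l}, x) \<in> EE" by (rule env_d[OF Zp a1 a2 lx[symmetric]])
    have d2: "(B - {l}, l) \<in> EE" by (rule env_d[OF Zp a2 a1 lx])
    have eqs: "insert x (B - {l}) = insert x B - {l}" using lx by auto
    show ?thesis
      apply (intro conjI exI[of _ "x # ys"])
      using d1 d2 ys Cons.prems eqs by auto
  qed
qed

end


lemma edge_vertices_insert: "edge_vertices (insert (A, l) S) = {A, insert l A} \<union> edge_vertices S"
  by (auto simp: edge_vertices_def)

lemma edge_vertices_single: "edge_vertices {(A, l)} = {A, insert l A}"
  by (auto simp: edge_vertices_def)

lemma conn_step:
  assumes conn: "edges_connected G" and S: "S \<subseteq> G" "S \<noteq> {}" "S \<noteq> G"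
  shows "\<exists>e\<in>G - S. fst e \<in> edge_vertices S \<or> insert (snd e) (fst e) \<in> edge_vertices S"
proof (rule ccontr)
  assume nex: "\<not> ?thesis"
  obtain s where s: "s \<in> S" using S by auto
  obtain f where f: "f \<in> G" "f \<notin> S" using S by auto
  have u: "fst s \<in> edge_vertices S" using s by (cases s) (auto simp: edge_vertices_def)
  have uG: "fst s \<in> edge_vertices G" using s S by (cases s) (auto simp: edge_vertices_def)
  have fG: "fst f \<in> edge_vertices G" using f by (cases f) (auto simp: edge_vertices_def)
  have path: "(edge_adj G)\<^sup>*\<^sup>* (fst s) (fst f)" using conn uG fG by (auto simp: edges_connected_def)
  have "w \<in> edge_vertices S" if "(edge_adj G)\<^sup>*\<^sup>* (fst s) w" for w
    using that
  proof (induction rule: rtranclp_induct)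
    case base then show ?case by (rule u)
  next
    case (step y z)
    from step.hyps(2) obtain A i where Ai: "(A, i) \<in> G"
      "(y = A \<and> z = A \<union> {i}) \<or> (z = A \<and> y = A \<union> {i})"
      by (auto simp: edge_adj_def)
    show ?case
    proof (cases "(A, i) \<in> S")
      case True
      then show ?thesis using Ai by (auto simp: edge_vertices_def)
    next
      case False
      then have "(A, i) \<in> G - S" using Ai by auto
      then have "\<not> (fst (A, i) \<in> edge_vertices S \<or> insert (snd (A, i)) (fst (A, i)) \<in> edge_vertices S)"
        using nex by blast
      then have "\<not> (A \<in> edge_vertices S \<or> insert i A \<in> edge_vertices S)" by simp
      then show ?thesis using step.IH Ai by auto
    qed
  qed
  then have "fst f \<in> edge_vertices S" using path by blast
  then show False using nex f by auto
qed

lemma grow: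
  assumes fin: "finite G"
    and step: "\<And>S. S \<subseteq> G \<Longrightarrow> S \<noteq> {} \<Longrightarrow> S \<noteq> G \<Longrightarrow> P S \<Longrightarrow> \<exists>e\<in>G - S. P (insert e S)"
    and S0: "S0 \<subseteq> G" "S0 \<noteq> {}" "P S0"
  shows "P G"
proof -
  have "\<forall>S. S \<subseteq> G \<and> S \<noteq> {} \<and> P S \<and> card (G - S) = m \<longrightarrow> P G" for m
  proof (induction m)
    case 0
    then show ?case using fin by (metis Diff_eq_empty_iff card_0_eq finite_Diff subset_antisym)
  next
    case (Suc m)
    show ?case
    proof (intro allI impI)
      fix S assume h: "S \<subseteq> G \<and> S \<noteq> {} \<and> P S \<and> card (G - S) = Suc m"
      then have "S \<noteq> G" by auto
      then obtain e where e: "e \<in> G - S" "P (insert e S)" using step h by blast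
      have "card (G - insert e S) = m" using h e fin
        by (metis Diff_insert card_Diff_singleton diff_Suc_1 finite_Diff)
      then have "insert e S \<subseteq> G \<and> insert e S \<noteq> {} \<and> P (insert e S) \<and> card (G - insert e S) = m"
        using h e by auto
      then show "P G" using Suc.IH by blast
    qed
  qed
  then show ?thesis using S0 by blast
qed

context
  fixes n :: nat and K :: "'k::field itself" and Z :: "pr set"
  assumes Zp: "\<forall>z\<in>Z. is_pr n z"
begin

definition good :: "pr set \<Rightarrow> bool" where
  "good S \<longleftrightarrow> (\<exists>B. \<forall>v\<in>edge_vertices S. \<exists>xs. chain (envelope n K Z) B xs \<and> set xs = snd ` S \<and>
      v \<in> set (verts B xs))"

lemma good_single: "(A, l) \<in> envelope n K Z \<Longrightarrow> good {(A, l)}"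
  unfolding good_def edge_vertices_single
  apply (rule exI[of _ A])
  using env_pr[OF Zp, of "(A,l)" K] by (auto simp: is_pr_def intro!: exI[of _ "[l]"])

lemma good_step:
  assumes g: "good S" and e: "(A, l) \<in> envelope n K Z" and ln: "l \<notin> snd ` S"
    and touch: "A \<in> edge_vertices S \<or> insert l A \<in> edge_vertices S"
  shows "good (insert (A, l) S)"
proof -
  have lA: "l \<notin> A" using env_pr[OF Zp e] by (simp add: is_pr_def)
  obtain B where B: "\<forall>v\<in>edge_vertices S. \<exists>xs. chain (envelope n K Z) B xs \<and> set xs = snd ` S \<and>
      v \<in> set (verts B xs)" using g unfolding good_def by blast
  have lab: "snd ` insert (A, l) S = insert l (snd ` S)" by simp
  show ?thesis
  proof (cases "A \<in> edge_vertices S")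
    case True
    then obtain xs where xs: "chain (envelope n K Z) B xs" "set xs = snd ` S" "A \<in> set (verts B xs)"
      using B by blast
    have lB: "l \<notin> B" using verts_bounds[OF xs(3)] lA by auto
    have L: "(B \<union> set xs, l) \<in> envelope n K Z \<and> (\<exists>ys. chain (envelope n K Z) B ys \<and> set ys = insert l (set xs) \<and>
        A \<in> set (verts B ys) \<and> insert l A \<in> set (verts B ys))"
      using lift[OF Zp xs(1) lB _ xs(3) e] xs(2) ln by auto
    show ?thesis unfolding good_def
    proof (intro exI[of _ B] ballI)
      fix v assume v: "v \<in> edge_vertices (insert (A, l) S)"
      show "\<exists>xs. chain (envelope n K Z) B xs \<and> set xs = snd ` insert (A, l) S \<and> v \<in> set (verts B xs)"
      proof (cases "v \<in> edge_vertices S")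
        case True
        then obtain xv where xv: "chain (envelope n K Z) B xv" "set xv = snd ` S" "v \<in> set (verts B xv)"
          using B by blast
        have "chain (envelope n K Z) B (xv @ [l]) \<and> set (verts B xv) \<subseteq> set (verts B (xv @ [l]))"
          using append_top[OF Zp xv(1) lB] L xv(2) xs(2) ln by auto
        then show ?thesis using xv by (intro exI[of _ "xv @ [l]"]) auto
      next
        case False
        then have "v = A \<or> v = insert l A" using v edge_vertices_insert by auto
        then show ?thesis using L xs(2) lab by auto
      qed
    qed
  next
    case False
    then have tv: "insert l A \<in> edge_vertices S" using touch by auto
    then obtain xs where xs: "chain (envelope n K Z) B xs" "set xs = snd ` S" "insert l A \<in> set (verts B xs)"
      using B by blast
    have lB: "l \<in> B" using verts_bounds[OF xs(3)] xs(2) ln by auto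
    have eA: "(insert l A - {l}, l) \<in> envelope n K Z" using e lA by simp
    have L: "(B - {l}, l) \<in> envelope n K Z \<and> (\<exists>ys. chain (envelope n K Z) (B - {l}) ys \<and> set ys = insert l (set xs) \<and>
        insert l A \<in> set (verts (B - {l}) ys) \<and> insert l A - {l} \<in> set (verts (B - {l}) ys))"
      using lower[OF Zp xs(1) lB _ xs(3) eA] xs(2) ln by auto
    show ?thesis unfolding good_def
    proof (intro exI[of _ "B - {l}"] ballI)
      fix v assume v: "v \<in> edge_vertices (insert (A, l) S)"
      show "\<exists>xs. chain (envelope n K Z) (B - {l}) xs \<and> set xs = snd ` insert (A, l) S \<and> v \<in> set (verts (B - {l}) xs)"
      proof (cases "v \<in> edge_vertices S")
        case True
        then obtain xv where xv: "chain (envelope n K Z) B xv" "set xv = snd ` S" "v \<in> set (verts B xv)"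
          using B by blast
        have ins: "insert l (B - {l}) = B" using lB by auto
        have "chain (envelope n K Z) (B - {l}) (l # xv)" using xv L ln ins by auto
        moreover have "v \<in> set (verts (B - {l}) (l # xv))" using xv ins by simp
        ultimately show ?thesis using xv by (intro exI[of _ "l # xv"]) auto
      next
        case False
        then have "v = A \<or> v = insert l A" using v edge_vertices_insert by auto
        moreover have "insert l A - {l} = A" using lA by auto
        ultimately show ?thesis using L xs(2) lab by auto
      qed
    qed
  qed
qed

end



theorem theorem1p4p6:
  fixes n :: nat and As :: "nat \<Rightarrow> nat set" and ix :: "nat \<Rightarrow> nat"
  assumes "n \<ge> 1"
    and "\<forall>k\<in>{1..n}. is_pr n (As k, ix k)"
    and "inj_on ix {1..n}"
    and "edges_connected ((\<lambda>k. (As k, ix k)) ` {1..n})"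
  shows "sufficient n TYPE('k::field) ((\<lambda>k. (As k, ix k)) ` {1..n})"
proof -
  define G where "G = (\<lambda>k. (As k, ix k)) ` {1..n}"
  define K where "K = TYPE('k)"
  have Zp: "\<forall>z\<in>G. is_pr n z" using assms(2) unfolding G_def by auto
  have fin: "finite G" unfolding G_def by simp
  have GE: "G \<subseteq> envelope n K G" by (auto intro: envelope.base)
  have labinj: "A = A'" if "(A, l) \<in> G" "(A', l) \<in> G" for A A' l
    using that assms(3) unfolding G_def inj_on_def by auto
  have labs: "snd ` G = {1..n}"
  proof -
    have "snd ` G = ix ` {1..n}" unfolding G_def by (auto simp: image_image)
    also have "\<dots> = {1..n}"
      by (rule endo_inj_surj) (use assms(2,3) in \<open>auto simp: is_pr_def\<close>)
    finally show ?thesis .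
  qed
  have gG: "good n K G G"
  proof (rule grow[OF fin, where P="good n K G"])
    fix S assume S: "S \<subseteq> G" "S \<noteq> {}" "S \<noteq> G" "good n K G S"
    obtain e where e: "e \<in> G - S" "fst e \<in> edge_vertices S \<or> insert (snd e) (fst e) \<in> edge_vertices S"
      using conn_step[OF assms(4)[folded G_def] S(1-3)] by blast
    obtain A l where Al: "e = (A, l)" by (cases e)
    have ln: "l \<notin> snd ` S"
    proof
      assume "l \<in> snd ` S"
      then obtain A' where "(A', l) \<in> S" by force
      then have "A' = A" using labinj S(1) e(1) Al by auto
      then show False using \<open>(A', l) \<in> S\<close> e(1) Al by auto
    qed
    have "good n K G (insert (A, l) S)"
      using good_step[OF Zp S(4), of A l] GE e Al ln by auto
    then show "\<exists>e\<in>G - S. good n K G (insert e S)" using e(1) Al by blast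
  next
    have e0: "(As 1, ix 1) \<in> G" unfolding G_def using assms(1) by auto
    show "{(As 1, ix 1)} \<subseteq> G" "{(As 1, ix 1)} \<noteq> {}" using e0 by auto
    show "good n K G {(As 1, ix 1)}" using good_single[OF Zp] GE e0 by auto
  qed
  obtain B where B: "\<forall>v\<in>edge_vertices G. \<exists>xs. chain (envelope n K G) B xs \<and> set xs = snd ` G \<and>
      v \<in> set (verts B xs)"
    using gG[unfolded good_def[OF Zp]] by blast
  have e1: "(As 1, ix 1) \<in> G" unfolding G_def using assms(1) by auto
  then have v1: "As 1 \<in> edge_vertices G" by (auto simp: edge_vertices_def)
  obtain xs where xs0: "chain (envelope n K G) B xs" "set xs = snd ` G" "As 1 \<in> set (verts B xs)"
    using bspec[OF B v1] by (elim exE conjE)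
  have xs: "chain (envelope n K G) B xs" "set xs = {1..n}" "As 1 \<in> set (verts B xs)"
    using xs0 labs by simp_all
  have "is_pr n (As 1, ix 1)" using Zp e1 by blast
  then have "As 1 \<subseteq> {1..n}" by (simp add: is_pr_def)
  then have "B \<subseteq> {1..n}" using verts_bounds[OF xs(3)] by auto
  then have B0: "B = {}" using chain_disj[OF xs(1)] xs(2) by auto
  have dist: "distinct xs" using chain_disj[OF xs(1)] by simp
  have len: "length xs = n" using distinct_card[OF dist] xs(2) by simp
  define ys where "ys = map (\<lambda>k. (set (take k xs), xs ! k)) [0..<n]"
  have ysE: "set ys \<subseteq> envelope n K G"
  proof
    fix y assume "y \<in> set ys"
    then obtain k where k: "k < n" "y = (set (take k xs), xs ! k)" unfolding ys_def by auto
    have "(B \<union> set (take k xs), xs ! k) \<in> envelope n K G" using chain_edges[OF xs(1)] k(1) len by simp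
    then show "y \<in> envelope n K G" using k(2) B0 by simp
  qed
  have su: "set [1..<Suc n] = {1..n}" by (simp only: set_upt atLeastLessThanSuc_atLeastAtMost)
  have pq: "qeq n (Ppoly n :: 'k qterm) (qprod (FF {} xs))"
    unfolding Ppoly_FF
    by (rule perm_FF) (simp_all only: su xs(2) dist distinct_upt empty_subsetI subset_refl Int_empty_left)
  have qq: "qprod (FF {} xs) = qprod (map (\<lambda>y. Sub T (Gen y)) (rev ys) :: 'k qterm list)"
    unfolding FF_map ys_def len by (simp add: rev_map comp_def)
  have ly: "length ys = n" unfolding ys_def by simp
  have "defining_set n K (envelope n K G)"
    unfolding defining_set_def
    apply (rule exI[of _ ys])
    using ly ysE pq qq by (simp add: K_def)
  then show ?thesis unfolding sufficient_def G_def[symmetric] K_def[symmetric] by blast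
qed

end
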